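(* For $t\ge t_0$ let $$\epsilon_r(t):=\min\Big\{\frac{(e^{wT_b(t)}-1)(w+\mu)}{W(e^{(w+\mu)T_b(t)}-1)},\ e^{-\bar\mu T_b(t)}\Big\}.$$ Suppose there is no controller update time in $(\tau_l(t),\tau_u(t)]$, that $\|x_e(s)\|_\infty\le d_e(s)$ for all $s$, that $\epsilon(\tau_l(t))\le\epsilon_r(t)$ and that $h_{\rm pf}(\tau_l(t))\le1$. Then $h_{\rm pf}(s)\le1$ for all $s\in[\tau_l(t),\tau_u(t)]$ and $h_{\rm ch}(\tau_u(t))\le1$; in particular $\epsilon(\tau_u(t))\le1$.
   Context: Parameters. $A\in\mathbb{R}^{n\times n}$, $B$, $K$ with $\bar A=A+BK$ Hurwitz; $Q$ symmetric positive definite, $P$ the symmetric positive definite solution of $P\bar A+\bar A^\top P=-Q$, $V(x)=x^\top Px$; $t_0\ge0$, $V_d(t_0)>0$, $\beta>0$, $a>1$ with $W:=\lambda_m(Q)/\lambda_M(P)-a\beta>0$, $V_d(t)=V_d(t_0)e^{-\beta(t-t_0)}$; $w:=\lambda_m(Q)/\lambda_M(P)-\beta$, $\mu:=\|A\|_2+\beta/2$, $\bar\mu:=\|A\|_\infty+\beta/2$, $c:=W\sqrt{\lambda_m(P)}/(2\sqrt n\|PBK\|_2)$, $T>0$, $\rho_T(h_0):=\frac{(w+\mu)(1-h_0)}{W(e^{(w+\mu)T}-1)}+1$. Closed loop: plant $\dot x=Ax+Bu$, $u=K\hat x$, with $\dot{\hat x}=\bar A\hat x$ between controller update times $\tilde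 r_k$ (at which $\hat x$ jumps); $x_e:=x-\hat x$; $d_e(t):=\|e^{A(t-t_k)}\|_\infty\delta_k$ for $t\in[\tilde r_k,\tilde r_{k+1})$, where $t_k\le\tilde r_k$ is the transmission time of the $k$-th packet of $np_k$ bits, $\delta_{k+1}=2^{-p_{k+1}}d_e(t_{k+1})$. $h_{\rm pf}(t):=V(x(t))/V_d(t)$, $\epsilon(t):=d_e(t)/(c\sqrt{V_d(t)})$, $h_{\rm ch}(t):=\epsilon(t)/\rho_T(h_{\rm pf}(t))$. Channel blackouts: the channel's maximum packet-size function $\bar p:\mathbb{R}_{\ge0}\to\mathbb{Z}_{\ge0}$ is constant on slots $(\theta_j,\theta_{j+1}]$; a blackout is a slot with $\bar p=0$. $\tau_l(t):=\inf\{s\ge t:\bar p(s)=0\}$, $\tau_u(t):=\inf\{s\ge\tau_l(t):\bar p(s)>0\}$ (start and end of the next blackout), $T_b(t):=\tau_u(t)-\tau_l(t)$. *)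

theory Defs
  imports "HOL-Analysis.Analysis"
begin

primrec mpow :: "real^'n^'n \<Rightarrow> nat \<Rightarrow> real^'n^'n" where
  "mpow M 0 = mat 1"
| "mpow M (Suc k) = M ** mpow M k"

definition mexp :: "real^'n^'n \<Rightarrow> real^'n^'n" where
  "mexp M = (\<Sum>k. (1 / fact k) *\<^sub>R mpow M k)"

definition real_eigenvalues :: "real^'n^'n \<Rightarrow> real set" where
  "real_eigenvalues M = {l. \<exists>v. v \<noteq> 0 \<and> M *v v = l *\<^sub>R v}"

definition lam_min :: "real^'n^'n \<Rightarrow> real" where
  "lam_min M = Inf (real_eigenvalues M)"

definition lam_max :: "real^'n^'n \<Rightarrow> real" where
  "lam_max M = Sup (real_eigenvalues M)"

definition hurwitz :: "real^'n^'n \<Rightarrow> bool" where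
  "hurwitz M \<longleftrightarrow> (\<forall>l (v::complex^'n). v \<noteq> 0 \<and>
      (\<chi> i j. complex_of_real (M$i$j)) *v v = l *s v \<longrightarrow> Re l < 0)"

definition symmetric_mat :: "real^'n^'n \<Rightarrow> bool" where
  "symmetric_mat M \<longleftrightarrow> transpose M = M"

definition pos_def :: "real^'n^'n \<Rightarrow> bool" where
  "pos_def M \<longleftrightarrow> symmetric_mat M \<and> (\<forall>x. x \<noteq> 0 \<longrightarrow> x \<bullet> (M *v x) > 0)"

definition norm2 :: "real^'m^'n \<Rightarrow> real" where
  "norm2 M = onorm (\<lambda>x. M *v x)"

definition norminf :: "real^'m^'n \<Rightarrow> real" where
  "norminf M = Max (range (\<lambda>i. \<Sum>j\<in>UNIV. \<bar>M$i$j\<bar>))"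

definition tau_l :: "(real \<Rightarrow> nat) \<Rightarrow> real \<Rightarrow> real" where
  "tau_l pbar t = Inf {s. s \<ge> t \<and> pbar s = 0}"

definition tau_u :: "(real \<Rightarrow> nat) \<Rightarrow> real \<Rightarrow> real" where
  "tau_u pbar t = Inf {s. s \<ge> tau_l pbar t \<and> pbar s > 0}"

definition T_b :: "(real \<Rightarrow> nat) \<Rightarrow> real \<Rightarrow> real" where
  "T_b pbar t = tau_u pbar t - tau_l pbar t"

end

theory Submission
  imports Defs
begin

typedef (overloaded) 'n sqm = "UNIV :: ((real^'n::finite) \<Rightarrow>\<^sub>L (real^'n)) set" by auto
setup_lifting type_definition_sqm

instantiation sqm :: (finite) real_normed_algebra_1
begin
lift_definition norm_sqm :: "'a sqm \<Rightarrow> real" is norm .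
lift_definition minus_sqm :: "'a sqm \<Rightarrow> 'a sqm \<Rightarrow> 'a sqm" is minus .
lift_definition plus_sqm :: "'a sqm \<Rightarrow> 'a sqm \<Rightarrow> 'a sqm" is plus .
lift_definition uminus_sqm :: "'a sqm \<Rightarrow> 'a sqm" is uminus .
lift_definition zero_sqm :: "'a sqm" is 0 .
lift_definition scaleR_sqm :: "real \<Rightarrow> 'a sqm \<Rightarrow> 'a sqm" is scaleR .
lift_definition times_sqm :: "'a sqm \<Rightarrow> 'a sqm \<Rightarrow> 'a sqm" is blinfun_compose .
lift_definition one_sqm :: "'a sqm" is id_blinfun .
definition dist_sqm :: "'a sqm \<Rightarrow> 'a sqm \<Rightarrow> real"
  where "dist_sqm a b = norm (a - b)"
definition uniformity_sqm :: "('a sqm \<times> 'a sqm) filter"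
  where "uniformity_sqm = (INF e\<in>{0 <..}. principal {(x, y). dist x y < e})"
definition open_sqm :: "'a sqm set \<Rightarrow> bool"
  where "open_sqm S = (\<forall>x\<in>S. \<forall>\<^sub>F (x', y) in uniformity. x' = x \<longrightarrow> y \<in> S)"
definition sgn_sqm :: "'a sqm \<Rightarrow> 'a sqm"
  where "sgn_sqm x = scaleR (inverse (norm x)) x"
instance
proof
  fix a b c :: "'a sqm" and r s :: real
  show "a + b + c = a + (b + c)" by transfer (simp add: algebra_simps)
  show "a + b = b + a" by transfer (simp add: algebra_simps)
  show "0 + a = a" by transfer simp
  show "- a + a = 0" by transfer simp
  show "a - b = a + - b" by transfer simp
  show "r *\<^sub>R (a + b) = r *\<^sub>R a + r *\<^sub>R b" by transfer (simp add: scaleR_add_right)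
  show "(r + s) *\<^sub>R a = r *\<^sub>R a + s *\<^sub>R a" by transfer (simp add: scaleR_add_left)
  show "r *\<^sub>R s *\<^sub>R a = (r * s) *\<^sub>R a" by transfer simp
  show "1 *\<^sub>R a = a" by transfer simp
  show "a * b * c = a * (b * c)" by transfer (rule blinfun_eqI, simp)
  show "(a + b) * c = a * c + b * c" by transfer (rule blinfun_eqI, simp add: blinfun.bilinear_simps)
  show "a * (b + c) = a * b + a * c" by transfer (rule blinfun_eqI, simp add: blinfun.bilinear_simps)
  show "1 * a = a" by transfer (rule blinfun_eqI, simp)
  show "a * 1 = a" by transfer (rule blinfun_eqI, simp)
  show "(0::'a sqm) \<noteq> 1"
  proof transfer
    show "(0::(real^'a) \<Rightarrow>\<^sub>L (real^'a)) \<noteq> id_blinfun"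
    proof
      assume h: "(0::(real^'a) \<Rightarrow>\<^sub>L (real^'a)) = id_blinfun"
      have "blinfun_apply (0::(real^'a) \<Rightarrow>\<^sub>L (real^'a)) (axis undefined 1) = axis undefined 1"
        by (subst h) simp
      then show False by (simp add: axis_eq_0_iff)
    qed
  qed
  show "r *\<^sub>R a * b = r *\<^sub>R (a * b)" by transfer (rule blinfun_eqI, simp add: blinfun.bilinear_simps)
  show "a * r *\<^sub>R b = r *\<^sub>R (a * b)" by transfer (rule blinfun_eqI, simp add: blinfun.bilinear_simps)
  show "dist a b = norm (a - b)" by (simp add: dist_sqm_def)
  show "(uniformity :: ('a sqm \<times> 'a sqm) filter) = (INF e\<in>{0 <..}. principal {(x, y). dist x y < e})"
    by (simp add: uniformity_sqm_def)
  show "sgn a = inverse (norm a) *\<^sub>R a" by (simp add: sgn_sqm_def)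
  show "(norm a = 0) = (a = 0)" by transfer simp
  show "norm (a + b) \<le> norm a + norm b" by transfer (rule norm_triangle_ineq)
  show "norm (r *\<^sub>R a) = \<bar>r\<bar> * norm a" by transfer simp
  show "norm (a * b) \<le> norm a * norm b" by transfer (rule norm_blinfun_compose)
  show "norm (1::'a sqm) = 1" by transfer simp
next
  fix U :: "'a sqm set"
  show "open U = (\<forall>x\<in>U. \<forall>\<^sub>F (x', y) in uniformity. x' = x \<longrightarrow> y \<in> U)"
    by (simp add: open_sqm_def)
qed
end

lemma norm_sqm_Rep: "norm (Rep_sqm a) = norm a" by transfer simp
lemma Rep_sqm_minus: "Rep_sqm (a - b) = Rep_sqm a - Rep_sqm b" by transfer simp

instance sqm :: (finite) banach
proof
  fix X :: "nat \<Rightarrow> 'a sqm"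
  assume "Cauchy X"
  then have "Cauchy (\<lambda>n. Rep_sqm (X n))"
    by (simp add: Cauchy_def dist_norm dist_sqm_def flip: Rep_sqm_minus norm_sqm_Rep)
  then obtain L where L: "(\<lambda>n. Rep_sqm (X n)) \<longlonglongrightarrow> L"
    using convergent_eq_Cauchy by blast
  have "X \<longlonglongrightarrow> Abs_sqm L"
    using L unfolding LIMSEQ_def
    by (simp add: dist_norm dist_sqm_def Rep_sqm_minus Abs_sqm_inverse flip: norm_sqm_Rep)
  then show "convergent X" by (auto simp: convergent_def)
qed


definition msq :: "real^'n^'n \<Rightarrow> 'n::finite sqm" where
  "msq M = Abs_sqm (Blinfun ((*v) M))"
definition mat_of :: "'n::finite sqm \<Rightarrow> real^'n^'n" where
  "mat_of X = matrix (blinfun_apply (Rep_sqm X))"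

lemma linear_Rep_sqm: "linear (blinfun_apply (Rep_sqm X))"
  using blinfun.bounded_linear_right bounded_linear.linear by blast

lemma mat_of_apply: "mat_of X *v v = blinfun_apply (Rep_sqm X) v"
  unfolding mat_of_def by (simp add: matrix_works linear_Rep_sqm)

lemma Rep_msq: "blinfun_apply (Rep_sqm (msq M)) = (*v) M"
  unfolding msq_def by (simp add: Abs_sqm_inverse bounded_linear_Blinfun_apply matrix_vector_mul_bounded_linear)

lemma mat_of_msq[simp]: "mat_of (msq M) = M"
  unfolding mat_of_def Rep_msq by (simp add: matrix_of_matrix_vector_mul)

lemma mat_eqI: "(\<And>v. (A::real^'n^'m) *v v = B *v v) \<Longrightarrow> A = B"
  by (metis matrix_of_matrix_vector_mul ext)

lemma mat_of_mult: "mat_of (X * Y) = mat_of X ** mat_of Y"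
  by (rule mat_eqI) (simp add: mat_of_apply times_sqm.rep_eq flip: matrix_vector_mul_assoc)

lemma mat_of_one: "mat_of 1 = mat 1"
  by (rule mat_eqI) (simp add: mat_of_apply one_sqm.rep_eq)

lemma mat_of_add: "mat_of (X + Y) = mat_of X + mat_of Y"
  by (rule mat_eqI) (simp add: mat_of_apply plus_sqm.rep_eq matrix_vector_mult_add_rdistrib blinfun.add_left)

lemma mat_of_scaleR: "mat_of (c *\<^sub>R X) = c *\<^sub>R mat_of X"
  by (rule mat_eqI) (simp add: mat_of_apply scaleR_sqm.rep_eq blinfun.scaleR_left
     flip: scaleR_matrix_vector_assoc)

lemma msq_scaleR: "msq (c *\<^sub>R M) = c *\<^sub>R msq M"
  unfolding msq_def
  by (metis (no_types) Rep_msq Rep_sqm_inverse blinfun_eqI msq_def scaleR_sqm.rep_eq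
      blinfun.scaleR_left scaleR_matrix_vector_assoc)

lemma bounded_linear_mat_of: "bounded_linear (mat_of :: 'n::finite sqm \<Rightarrow> real^'n^'n)"
proof
  fix X Y :: "'n sqm" and c :: real
  show "mat_of (X + Y) = mat_of X + mat_of Y" by (rule mat_of_add)
  show "mat_of (c *\<^sub>R X) = c *\<^sub>R mat_of X" by (rule mat_of_scaleR)
  show "\<exists>K. \<forall>x::'n sqm. norm (mat_of x) \<le> norm x * K"
  proof (intro exI allI)
    fix X :: "'n sqm"
    have "norm (mat_of X) \<le> (\<Sum>i\<in>UNIV. norm (mat_of X $ i))" unfolding norm_vec_def by (rule L2_set_le_sum) simp
    also have "\<dots> \<le> (\<Sum>i\<in>(UNIV::'n set). \<Sum>j\<in>(UNIV::'n set). \<bar>mat_of X $ i $ j\<bar>)"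
      by (intro sum_mono norm_le_l1_cart)
    also have "\<dots> \<le> (\<Sum>i\<in>(UNIV::'n set). \<Sum>j\<in>(UNIV::'n set). norm X)"
    proof (intro sum_mono)
      fix i j
      have "mat_of X $ i $ j = (mat_of X *v axis j 1) $ i"
        by (simp add: matrix_vector_mult_def axis_def if_distrib cong: if_cong)
      also have "\<dots> = blinfun_apply (Rep_sqm X) (axis j 1) $ i" by (simp add: mat_of_apply)
      finally have "\<bar>mat_of X $ i $ j\<bar> \<le> norm (blinfun_apply (Rep_sqm X) (axis j 1))"
        by (metis component_le_norm_cart)
      also have "\<dots> \<le> norm (Rep_sqm X) * norm (axis j (1::real) :: real^'n)" by (rule norm_blinfun)
      finally show "\<bar>mat_of X $ i $ j\<bar> \<le> norm X" by (simp add: norm_sqm_Rep)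
    qed
    also have "\<dots> = norm X * (real CARD('n) * real CARD('n))" by simp
    finally show "norm (mat_of X) \<le> norm X * (real CARD('n) * real CARD('n))" .
  qed
qed

lemma mpow_eq: "mpow M k = mat_of (msq M ^ k)"
  by (induction k) (simp_all add: mat_of_one mat_of_mult)

lemma mexp_eq: "mexp M = mat_of (exp (msq M))"
proof -
  have "mat_of (exp (msq M)) = mat_of (\<Sum>k. (1 / fact k) *\<^sub>R (msq M ^ k))"
    by (simp add: exp_def divide_inverse_commute)
  also have "\<dots> = (\<Sum>k. mat_of ((1 / fact k) *\<^sub>R (msq M ^ k)))"
    using bounded_linear.suminf[OF bounded_linear_mat_of, of "\<lambda>k. (1 / fact k) *\<^sub>R (msq M ^ k)"]
      summable_exp_generic[of "msq M"] by (simp add: divide_inverse_commute)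
  also have "\<dots> = mexp M" by (simp add: mexp_def mat_of_scaleR mpow_eq)
  finally show ?thesis ..
qed

lemma mexp_summable: "summable (\<lambda>k. (1 / fact k) *\<^sub>R mpow M k)"
  using bounded_linear.summable[OF bounded_linear_mat_of summable_exp_generic[of "msq M"]]
  by (simp add: mat_of_scaleR mpow_eq divide_inverse_commute)

lemma mexp_add: "mexp (s *\<^sub>R M) ** mexp (t *\<^sub>R M) = mexp ((s + t) *\<^sub>R M)"
  by (simp add: mexp_eq msq_scaleR flip: mat_of_mult exp_add_commuting scaleR_add_left)

lemma msq_0: "msq 0 = 0" using msq_scaleR[of 0] by simp

lemma mexp_zero: "mexp (0 *\<^sub>R M) = mat 1"
  by (simp add: mexp_eq msq_0 mat_of_one)

lemma mexp_deriv:
  "((\<lambda>s. mexp ((s - r) *\<^sub>R M) *v v) has_vector_derivative (M *v (mexp ((s - r) *\<^sub>R M) *v v))) (at s within S)"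
proof -
  have d1: "((\<lambda>s. s - r) has_vector_derivative 1) (at s within S)"
    by (auto intro!: derivative_eq_intros)
  have d2: "((\<lambda>u. exp (u *\<^sub>R msq M)) has_vector_derivative (msq M * exp ((s - r) *\<^sub>R msq M))) (at (s - r) within (\<lambda>s. s - r) ` S)"
    by (rule exp_scaleR_has_vector_derivative_left[THEN has_vector_derivative_at_within])
  have bl: "bounded_linear (\<lambda>X. mat_of X *v v)"
    unfolding mat_of_apply
  proof (rule bounded_linear_intro[where K="norm v"])
    fix X Y :: "'a sqm" and c :: real
    show "blinfun_apply (Rep_sqm (X + Y)) v = blinfun_apply (Rep_sqm X) v + blinfun_apply (Rep_sqm Y) v"
      by (simp add: plus_sqm.rep_eq blinfun.add_left)
    show "blinfun_apply (Rep_sqm (c *\<^sub>R X)) v = c *\<^sub>R blinfun_apply (Rep_sqm X) v"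
      by (simp add: scaleR_sqm.rep_eq blinfun.scaleR_left)
    show "norm (blinfun_apply (Rep_sqm X) v) \<le> norm X * norm v"
      using norm_blinfun[of "Rep_sqm X" v] by (simp add: norm_sqm_Rep)
  qed
  have "((\<lambda>s. exp ((s - r) *\<^sub>R msq M)) has_vector_derivative (msq M * exp ((s - r) *\<^sub>R msq M))) (at s within S)"
    using vector_diff_chain_within[OF d1 d2] by (simp add: o_def)
  from bounded_linear.has_vector_derivative[OF bl this]
  show ?thesis
    by (simp add: mexp_eq msq_scaleR mat_of_mult matrix_vector_mul_assoc)
qed

lemma norminf_ge: "(\<Sum>j\<in>UNIV. \<bar>M$i$j\<bar>) \<le> norminf M"
  unfolding norminf_def by (rule Max_ge) auto

lemma norminf_le_iff: "norminf M \<le> c \<longleftrightarrow> (\<forall>i. (\<Sum>j\<in>UNIV. \<bar>M$i$j\<bar>) \<le> c)"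
  unfolding norminf_def by (subst Max_le_iff) auto

lemma norminf_nonneg: "0 \<le> norminf M"
  by (rule order_trans[OF _ norminf_ge]) (simp add: sum_nonneg)

lemma norminf_sum: "finite A \<Longrightarrow> norminf (\<Sum>k\<in>A. f k) \<le> (\<Sum>k\<in>A. norminf (f k))"
proof (subst norminf_le_iff, intro allI)
  fix i assume fin: "finite A"
  have "(\<Sum>j\<in>UNIV. \<bar>(\<Sum>k\<in>A. f k) $ i $ j\<bar>) = (\<Sum>j\<in>UNIV. \<bar>\<Sum>k\<in>A. f k $ i $ j\<bar>)"
    by (simp add: sum_component)
  also have "\<dots> \<le> (\<Sum>j\<in>UNIV. \<Sum>k\<in>A. \<bar>f k $ i $ j\<bar>)"
    by (intro sum_mono sum_abs)
  also have "\<dots> = (\<Sum>k\<in>A. \<Sum>j\<in>UNIV. \<bar>f k $ i $ j\<bar>)" by (rule sum.swap)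
  also have "\<dots> \<le> (\<Sum>k\<in>A. norminf (f k))" by (intro sum_mono norminf_ge)
  finally show "(\<Sum>j\<in>UNIV. \<bar>(\<Sum>k\<in>A. f k) $ i $ j\<bar>) \<le> (\<Sum>k\<in>A. norminf (f k))" .
qed

lemma norminf_scaleR: "norminf (c *\<^sub>R M) = \<bar>c\<bar> * norminf M"
proof -
  have eq: "(\<lambda>i. \<Sum>j\<in>UNIV. \<bar>(c *\<^sub>R M)$i$j\<bar>) = (\<lambda>i. \<bar>c\<bar> * (\<Sum>j\<in>UNIV. \<bar>M$i$j\<bar>))"
    by (simp add: abs_mult sum_distrib_left)
  have "norminf (c *\<^sub>R M) = Max ((\<lambda>x. \<bar>c\<bar> * x) ` range (\<lambda>i. \<Sum>j\<in>UNIV. \<bar>M$i$j\<bar>))"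
    by (simp only: norminf_def image_image eq)
  also have "\<dots> = \<bar>c\<bar> * norminf M"
    unfolding norminf_def
    by (rule mono_Max_commute[symmetric]) (auto simp: mono_def mult_left_mono)
  finally show ?thesis .
qed

lemma norminf_mult: "norminf ((X::real^'n^'n) ** Y) \<le> norminf X * norminf Y"
proof (subst norminf_le_iff, intro allI)
  fix i
  have "(\<Sum>j\<in>UNIV. \<bar>(X ** Y) $ i $ j\<bar>) = (\<Sum>j\<in>UNIV. \<bar>\<Sum>l\<in>UNIV. X$i$l * Y$l$j\<bar>)"
    by (simp add: matrix_matrix_mult_def)
  also have "\<dots> \<le> (\<Sum>j\<in>UNIV. \<Sum>l\<in>UNIV. \<bar>X$i$l\<bar> * \<bar>Y$l$j\<bar>)"
    by (intro sum_mono order_trans[OF sum_abs]) (simp add: abs_mult)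
  also have "\<dots> = (\<Sum>l\<in>UNIV. \<bar>X$i$l\<bar> * (\<Sum>j\<in>UNIV. \<bar>Y$l$j\<bar>))"
    by (subst sum.swap) (simp add: sum_distrib_left)
  also have "\<dots> \<le> (\<Sum>l\<in>UNIV. \<bar>X$i$l\<bar> * norminf Y)"
    by (intro sum_mono mult_left_mono norminf_ge) simp
  also have "\<dots> = (\<Sum>l\<in>UNIV. \<bar>X$i$l\<bar>) * norminf Y" by (simp add: sum_distrib_right)
  also have "\<dots> \<le> norminf X * norminf Y" by (intro mult_right_mono norminf_ge norminf_nonneg)
  finally show "(\<Sum>j\<in>UNIV. \<bar>(X ** Y) $ i $ j\<bar>) \<le> norminf X * norminf Y" .
qed

lemma norminf_mat1: "norminf (mat 1 :: real^'n^'n) \<le> 1"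
proof (subst norminf_le_iff, intro allI)
  fix i :: 'n
  have "(\<Sum>j\<in>UNIV. \<bar>(mat 1 :: real^'n^'n)$i$j\<bar>) = (\<Sum>j\<in>UNIV. if i = j then 1 else 0)"
    by (intro sum.cong) (auto simp: mat_def)
  also have "\<dots> = 1" by simp
  finally show "(\<Sum>j\<in>UNIV. \<bar>(mat 1 :: real^'n^'n)$i$j\<bar>) \<le> 1" by simp
qed

lemma norminf_mpow: "norminf (mpow M k) \<le> norminf M ^ k"
proof (induction k)
  case 0 then show ?case by (simp add: norminf_mat1)
next
  case (Suc k)
  have "norminf (mpow M (Suc k)) \<le> norminf M * norminf (mpow M k)"
    by (simp add: norminf_mult)
  also have "\<dots> \<le> norminf M * norminf M ^ k"
    by (intro mult_left_mono Suc norminf_nonneg)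
  finally show ?case by simp
qed

lemma norminf_mexp: "norminf (mexp M) \<le> exp (norminf M)"
proof (subst norminf_le_iff, intro allI)
  fix i
  define f where "f k = (1 / fact k) *\<^sub>R mpow M k" for k
  have sf: "(\<lambda>N. \<Sum>k<N. f k) \<longlonglongrightarrow> mexp M"
    unfolding mexp_def f_def using mexp_summable summable_LIMSEQ by blast
  have lim: "(\<lambda>N. \<Sum>j\<in>UNIV. \<bar>(\<Sum>k<N. f k) $ i $ j\<bar>) \<longlonglongrightarrow> (\<Sum>j\<in>UNIV. \<bar>mexp M $ i $ j\<bar>)"
    by (intro tendsto_sum tendsto_rabs tendsto_vec_nth sf)
  have es: "summable (\<lambda>k. norminf M ^ k / fact k)"
    using summable_exp_generic[of "norminf M"] by (simp add: divide_inverse mult.commute)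
  have ee: "exp (norminf M) = (\<Sum>k. norminf M ^ k / fact k)"
    by (simp add: exp_def divide_inverse mult.commute)
  have "(\<Sum>j\<in>UNIV. \<bar>(\<Sum>k<N. f k) $ i $ j\<bar>) \<le> exp (norminf M)" for N
  proof -
    have "(\<Sum>j\<in>UNIV. \<bar>(\<Sum>k<N. f k) $ i $ j\<bar>) \<le> norminf (\<Sum>k<N. f k)" by (rule norminf_ge)
    also have "\<dots> \<le> (\<Sum>k<N. norminf (f k))" by (rule norminf_sum) simp
    also have "\<dots> \<le> (\<Sum>k<N. norminf M ^ k / fact k)"
      by (intro sum_mono) (simp add: f_def norminf_scaleR divide_right_mono norminf_mpow)
    also have "\<dots> \<le> exp (norminf M)"
      unfolding ee by (intro sum_le_suminf es) (auto simp: norminf_nonneg)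
    finally show ?thesis .
  qed
  then show "(\<Sum>j\<in>UNIV. \<bar>mexp M $ i $ j\<bar>) \<le> exp (norminf M)"
    by (intro LIMSEQ_le_const2[OF lim]) auto
qed

lemma norminf_eq_0: "norminf M = 0 \<Longrightarrow> M = 0"
proof -
  assume h: "norminf M = 0"
  have "\<bar>M$i$j\<bar> = 0" for i j
  proof -
    have "\<bar>M$i$j\<bar> \<le> (\<Sum>j\<in>UNIV. \<bar>M$i$j\<bar>)" by (rule member_le_sum) auto
    also have "\<dots> \<le> 0" using norminf_ge[of M i] h by simp
    finally show ?thesis by simp
  qed
  then show "M = 0" by (simp add: vec_eq_iff)
qed

lemma dot_transpose: "(x::real^'n) \<bullet> (A *v y) = (transpose A *v x) \<bullet> y"
proof -
  have "x \<bullet> (A *v y) = (\<Sum>i\<in>UNIV. \<Sum>j\<in>UNIV. x$i * (A$i$j * y$j))"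
    by (simp add: inner_vec_def matrix_vector_mult_def sum_distrib_left)
  also have "\<dots> = (\<Sum>j\<in>UNIV. \<Sum>i\<in>UNIV. x$i * (A$i$j * y$j))" by (rule sum.swap)
  also have "\<dots> = (transpose A *v x) \<bullet> y"
    by (simp add: inner_vec_def matrix_vector_mult_def transpose_def sum_distrib_left mult_ac)
  finally show ?thesis .
qed

lemma sym_dot: "symmetric_mat P \<Longrightarrow> (x::real^'n) \<bullet> (P *v y) = y \<bullet> (P *v x)"
  unfolding symmetric_mat_def by (metis dot_transpose inner_commute)

lemma psd_null:
  fixes S :: "real^'n^'n"
  assumes sym: "symmetric_mat S" and psd: "\<And>x. 0 \<le> x \<bullet> (S *v x)" and u: "u \<bullet> (S *v u) = 0"
  shows "S *v u = 0"
proof (rule ccontr)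
  define v where "v = S *v u"
  assume "S *v u \<noteq> 0"
  then have vp: "0 < v \<bullet> v" using v_def by simp
  define q where "q = v \<bullet> (S *v v)"
  have q0: "0 \<le> q" using psd q_def by simp
  define t where "t = (v \<bullet> v) / (q + 1)"
  have t0: "0 < t" using vp q0 t_def by simp
  have "0 \<le> (u - t *\<^sub>R v) \<bullet> (S *v (u - t *\<^sub>R v))" by (rule psd)
  also have "\<dots> = u \<bullet> (S *v u) - t * (u \<bullet> (S *v v)) - t * (v \<bullet> (S *v u)) + t * t * q"
    by (simp add: matrix_vector_mult_diff_distrib matrix_vector_mult_scaleR inner_diff_left
        inner_diff_right q_def algebra_simps)
  also have "\<dots> = t * (- 2 * (v \<bullet> v) + t * q)"
    using u sym_dot[OF sym, of u v] by (simp add: v_def algebra_simps)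
  finally have "0 \<le> - 2 * (v \<bullet> v) + t * q"
    using t0 by (simp add: zero_le_mult_iff)
  moreover have "t * q \<le> v \<bullet> v"
    using q0 vp unfolding t_def by (simp add: field_simps)
  ultimately show False using vp by simp
qed

lemma sphere_nonempty: "sphere (0::real^'n) 1 \<noteq> {}"
proof -
  have "axis undefined (1::real) \<in> sphere (0::real^'n) 1" by simp
  then show ?thesis by blast
qed

lemma quad_scale: "(c *\<^sub>R (x::real^'n)) \<bullet> (P *v (c *\<^sub>R x)) = c^2 * (x \<bullet> (P *v x))"
  by (simp only: matrix_vector_mult_scaleR inner_scaleR_left inner_scaleR_right power2_eq_square mult.assoc)

lemma rayleigh_min:
  fixes P :: "real^'n^'n"
  assumes sym: "symmetric_mat P"
  shows "\<exists>u. norm u = 1 \<and> u \<bullet> (P *v u) = lam_min P \<and> (\<forall>x. lam_min P * (x \<bullet> x) \<le> x \<bullet> (P *v x))"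
proof -
  have cont: "continuous_on (sphere 0 1) (\<lambda>x::real^'n. x \<bullet> (P *v x))"
    by (intro continuous_intros linear_continuous_on matrix_vector_mul_bounded_linear)
  obtain u where u: "u \<in> sphere 0 1" and umin: "\<And>y. y \<in> sphere 0 1 \<Longrightarrow> u \<bullet> (P *v u) \<le> y \<bullet> (P *v y)"
    using continuous_attains_inf[OF compact_sphere sphere_nonempty cont] by blast
  define m where "m = u \<bullet> (P *v u)"
  have lb: "m * (x \<bullet> x) \<le> x \<bullet> (P *v x)" for x
  proof (cases "x = 0")
    case True then show ?thesis by simp
  next
    case False
    have "(inverse (norm x) *\<^sub>R x) \<in> sphere 0 1" using False by simp
    then have "m \<le> (inverse (norm x)) ^ 2 * (x \<bullet> (P *v x))"
      using umin[of "inverse (norm x) *\<^sub>R x"] unfolding m_def quad_scale by simp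
    then have "m * (norm x)^2 \<le> x \<bullet> (P *v x)"
      using False by (simp add: field_simps power2_eq_square)
    then show ?thesis by (simp add: power2_norm_eq_inner)
  qed
  define S where "S = P - m *\<^sub>R mat 1"
  have Sx: "S *v x = P *v x - m *\<^sub>R x" for x
    by (simp add: S_def matrix_vector_mult_diff_rdistrib flip: scaleR_matrix_vector_assoc)
  have symS: "symmetric_mat S"
    using sym unfolding symmetric_mat_def S_def
    by (simp add: transpose_def vec_eq_iff mat_def)
  have "S *v u = 0"
  proof (rule psd_null[OF symS])
    show "0 \<le> x \<bullet> (S *v x)" for x using lb[of x] by (simp add: Sx inner_diff_right)
    show "u \<bullet> (S *v u) = 0" using u by (simp add: Sx inner_diff_right m_def dot_square_norm)
  qed
  then have eig: "m \<in> real_eigenvalues P"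
    unfolding real_eigenvalues_def using u by (auto simp: Sx intro!: exI[of _ u])
  have "\<And>l. l \<in> real_eigenvalues P \<Longrightarrow> m \<le> l"
  proof -
    fix l assume "l \<in> real_eigenvalues P"
    then obtain v where v: "v \<noteq> 0" "P *v v = l *\<^sub>R v" unfolding real_eigenvalues_def by blast
    have "m * (v \<bullet> v) \<le> l * (v \<bullet> v)" using lb[of v] v by simp
    then show "m \<le> l" using v by simp
  qed
  then have "lam_min P = m"
    unfolding lam_min_def using eig by (intro cInf_eq_minimum) auto
  then show ?thesis using u lb by (auto simp: m_def)
qed

lemma rayleigh_max:
  fixes P :: "real^'n^'n"
  assumes sym: "symmetric_mat P"
  shows "\<exists>u. norm u = 1 \<and> u \<bullet> (P *v u) = lam_max P \<and> (\<forall>x. x \<bullet> (P *v x) \<le> lam_max P * (x \<bullet> x))"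
proof -
  have cont: "continuous_on (sphere 0 1) (\<lambda>x::real^'n. x \<bullet> (P *v x))"
    by (intro continuous_intros linear_continuous_on matrix_vector_mul_bounded_linear)
  obtain u where u: "u \<in> sphere 0 1" and umax: "\<And>y. y \<in> sphere 0 1 \<Longrightarrow> y \<bullet> (P *v y) \<le> u \<bullet> (P *v u)"
    using continuous_attains_sup[OF compact_sphere sphere_nonempty cont] by blast
  define m where "m = u \<bullet> (P *v u)"
  have ub: "x \<bullet> (P *v x) \<le> m * (x \<bullet> x)" for x
  proof (cases "x = 0")
    case True then show ?thesis by simp
  next
    case False
    have "(inverse (norm x) *\<^sub>R x) \<in> sphere 0 1" using False by simp
    then have "(inverse (norm x)) ^ 2 * (x \<bullet> (P *v x)) \<le> m"
      using umax[of "inverse (norm x) *\<^sub>R x"] unfolding m_def quad_scale by simp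
    then have "x \<bullet> (P *v x) \<le> m * (norm x)^2"
      using False by (simp add: field_simps power2_eq_square)
    then show ?thesis by (simp add: power2_norm_eq_inner)
  qed
  define S where "S = m *\<^sub>R mat 1 - P"
  have Sx: "S *v x = m *\<^sub>R x - P *v x" for x
    by (simp add: S_def matrix_vector_mult_diff_rdistrib flip: scaleR_matrix_vector_assoc)
  have symS: "symmetric_mat S"
    using sym unfolding symmetric_mat_def S_def
    by (simp add: transpose_def vec_eq_iff mat_def)
  have "S *v u = 0"
  proof (rule psd_null[OF symS])
    show "0 \<le> x \<bullet> (S *v x)" for x using ub[of x] by (simp add: Sx inner_diff_right)
    show "u \<bullet> (S *v u) = 0" using u by (simp add: Sx inner_diff_right m_def dot_square_norm)
  qed
  then have eig: "m \<in> real_eigenvalues P"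
    unfolding real_eigenvalues_def using u by (auto simp: Sx intro!: exI[of _ u])
  have "\<And>l. l \<in> real_eigenvalues P \<Longrightarrow> l \<le> m"
  proof -
    fix l assume "l \<in> real_eigenvalues P"
    then obtain v where v: "v \<noteq> 0" "P *v v = l *\<^sub>R v" unfolding real_eigenvalues_def by blast
    have "l * (v \<bullet> v) \<le> m * (v \<bullet> v)" using ub[of v] v by simp
    then show "l \<le> m" using v by simp
  qed
  then have "lam_max P = m"
    unfolding lam_max_def using eig by (intro cSup_eq_maximum) auto
  then show ?thesis using u ub by (auto simp: m_def)
qed

lemma right_deriv_neg:
  fixes f :: "real \<Rightarrow> real"
  assumes "(f has_real_derivative d) (at s within {s..})" "d < 0"
  shows "\<exists>e>0. \<forall>u. s < u \<and> u < s + e \<longrightarrow> f u < f s"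
proof -
  have "((\<lambda>y. (f y - f s) / (y - s)) \<longlongrightarrow> d) (at_right s)"
    using assms(1) by (simp add: has_field_derivative_iff at_within_Ici_at_right)
  then have "\<forall>\<^sub>F y in at_right s. (f y - f s) / (y - s) < 0"
    using assms(2) by (rule order_tendstoD(2))
  then obtain b where b: "b > s" "\<And>y. y > s \<Longrightarrow> y < b \<Longrightarrow> (f y - f s) / (y - s) < 0"
    unfolding eventually_at_right_field by blast
  show ?thesis
  proof (intro exI[of _ "b - s"] conjI allI impI)
    show "0 < b - s" using b by simp
    fix u assume "s < u \<and> u < s + (b - s)"
    then have "(f u - f s) / (u - s) < 0" "u - s > 0" using b by auto
    then show "f u < f s" by (simp add: divide_less_0_iff)
  qed
qed

lemma right_comparison:
  fixes f :: "real \<Rightarrow> real"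
  assumes ab: "a \<le> b" and cont: "continuous_on {a..b} f" and fa: "f a \<le> 0"
    and der: "\<And>s. a \<le> s \<Longrightarrow> s < b \<Longrightarrow> f s = 0 \<Longrightarrow>
        \<exists>d<0. (f has_real_derivative d) (at s within {s..})"
  shows "\<forall>s\<in>{a..b}. f s \<le> 0"
proof -
  define S where "S = {s\<in>{a..b}. \<forall>u\<in>{a..s}. f u \<le> 0}"
  have aS: "a \<in> S" using ab fa by (auto simp: S_def)
  have bdd: "bdd_above S" by (auto simp: S_def bdd_above_def)
  define \<sigma> where "\<sigma> = Sup S"
  have a\<sigma>: "a \<le> \<sigma>" unfolding \<sigma>_def using aS bdd by (rule cSup_upper)
  have \<sigma>b: "\<sigma> \<le> b" unfolding \<sigma>_def using aS by (intro cSup_least) (auto simp: S_def)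
  have below: "f u \<le> 0" if "a \<le> u" "u < \<sigma>" for u
  proof -
    have "\<exists>s\<in>S. u < s" using less_cSupD[of S u] aS that(2) unfolding \<sigma>_def by blast
    then obtain s where "s \<in> S" "u < s" by blast
    then show ?thesis using that by (auto simp: S_def)
  qed
  have f\<sigma>: "f \<sigma> \<le> 0"
  proof (rule ccontr)
    assume "\<not> f \<sigma> \<le> 0"
    then have pos: "f \<sigma> > 0" by simp
    then have "a < \<sigma>" using fa a\<sigma> by (cases "a = \<sigma>") auto
    from cont have "continuous (at \<sigma> within {a..b}) f"
      using a\<sigma> \<sigma>b by (simp add: continuous_on_eq_continuous_within)
    then obtain e where e: "e > 0" "\<And>u. u \<in> {a..b} \<Longrightarrow> dist u \<sigma> < e \<Longrightarrow> dist (f u) (f \<sigma>) < f \<sigma>"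
      using pos unfolding continuous_within_eps_delta by blast
    define u where "u = max a (\<sigma> - e / 2)"
    have "u \<in> {a..b}" "dist u \<sigma> < e" "a \<le> u" "u < \<sigma>"
      using e \<open>a < \<sigma>\<close> \<sigma>b by (auto simp: u_def dist_real_def)
    then have "f u > 0" "f u \<le> 0" using e(2)[of u] below[of u] by (auto simp: dist_real_def)
    then show False by simp
  qed
  have \<sigma>S: "\<sigma> \<in> S"
  proof -
    have "f u \<le> 0" if "u \<in> {a..\<sigma>}" for u
      using that below[of u] f\<sigma> by (cases "u = \<sigma>") auto
    then show ?thesis using a\<sigma> \<sigma>b by (auto simp: S_def)
  qed
  have "\<sigma> = b"
  proof (rule ccontr)
    assume "\<sigma> \<noteq> b"
    then have lt: "\<sigma> < b" using \<sigma>b by simp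
    obtain e where e: "e > 0" "\<And>u. \<sigma> < u \<Longrightarrow> u < \<sigma> + e \<Longrightarrow> u \<le> b \<Longrightarrow> f u \<le> 0"
    proof (cases "f \<sigma> = 0")
      case True
      then obtain d where "d < 0" "(f has_real_derivative d) (at \<sigma> within {\<sigma>..})"
        using der[OF a\<sigma> lt] by blast
      from right_deriv_neg[OF this(2,1)] obtain e where "e > 0" "\<And>u. \<sigma> < u \<and> u < \<sigma> + e \<Longrightarrow> f u < f \<sigma>"
        by blast
      then show ?thesis using that True by fastforce
    next
      case False
      then have neg: "f \<sigma> < 0" using f\<sigma> by simp
      from cont have "continuous (at \<sigma> within {a..b}) f"
        using a\<sigma> \<sigma>b by (simp add: continuous_on_eq_continuous_within)
      then obtain e where e: "e > 0" "\<And>u. u \<in> {a..b} \<Longrightarrow> dist u \<sigma> < e \<Longrightarrow> dist (f u) (f \<sigma>) < - f \<sigma>"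
        using neg unfolding continuous_within_eps_delta by (metis neg_0_less_iff_less)
      show ?thesis
      proof (rule that[OF e(1)])
        fix u assume "\<sigma> < u" "u < \<sigma> + e" "u \<le> b"
        then have "dist (f u) (f \<sigma>) < - f \<sigma>" using e(2)[of u] a\<sigma> by (auto simp: dist_real_def)
        then show "f u \<le> 0" by (auto simp: dist_real_def)
      qed
    qed
    define s' where "s' = min b (\<sigma> + e / 2)"
    have "s' \<in> S"
      unfolding S_def
    proof (safe)
      show "s' \<in> {a..b}" using a\<sigma> lt e(1) by (auto simp: s'_def)
      fix u assume u: "u \<in> {a..s'}"
      show "f u \<le> 0"
      proof (cases "u \<le> \<sigma>")
        case True then show ?thesis using \<sigma>S u by (auto simp: S_def)
      next
        case False then show ?thesis using e(2)[of u] u e(1) by (auto simp: s'_def)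
      qed
    qed
    then have "s' \<le> \<sigma>" unfolding \<sigma>_def using bdd by (rule cSup_upper)
    then show False using lt e(1) by (auto simp: s'_def)
  qed
  then show ?thesis using \<sigma>S by (auto simp: S_def)
qed

lemma exp_ratio:
  fixes p q D T :: real
  assumes p: "0 < p" and pq: "p \<le> q" and D: "0 \<le> D" "D \<le> T" and T: "0 < T"
  shows "(exp (p*T) - 1) * (exp (q*D) - 1) \<le> (exp (p*D) - 1) * (exp (q*T) - 1)"
proof -
  define r where "r = q / p"
  have r1: "r \<ge> 1" using p pq by (simp add: r_def)
  define a where "a = exp (p * D)"
  define B where "B = exp (p * T)"
  have a1: "1 \<le> a" using p D by (simp add: a_def)
  have aB: "a \<le> B" using p D by (simp add: a_def B_def)
  have B1: "1 < B" using p T by (simp add: B_def)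
  define t where "t = (a - 1) / (B - 1)"
  have t0: "0 \<le> t" "t \<le> 1" using a1 aB B1 by (auto simp: t_def)
  have tB: "t * (B - 1) = a - 1" using B1 by (simp add: t_def)
  have acomb: "(1 - t) *\<^sub>R 1 + t *\<^sub>R B = a"
    using tB by (simp add: algebra_simps)
  have conv: "((1 - t) *\<^sub>R 1 + t *\<^sub>R B) powr r \<le> (1 - t) * 1 powr r + t * B powr r"
    using convex_onD[OF powr_convex[OF r1] t0, of 1 B] B1 by simp
  have pa: "a powr r = exp (q * D)" using p by (simp add: a_def powr_def r_def)
  have pB: "B powr r = exp (q * T)" using p by (simp add: B_def powr_def r_def)
  have "exp (q * D) - 1 \<le> t * (exp (q * T) - 1)"
    using conv unfolding acomb pa pB by (simp add: algebra_simps)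
  then have "(B - 1) * (exp (q * D) - 1) \<le> (B - 1) * (t * (exp (q * T) - 1))"
    using B1 by (intro mult_left_mono) auto
  also have "\<dots> = (a - 1) * (exp (q * T) - 1)" using B1 by (simp add: t_def)
  finally show ?thesis by (simp add: a_def B_def)
qed

lemma inner_has_real_derivative:
  assumes "(f has_vector_derivative f') (at s within S)" "(g has_vector_derivative g') (at s within S)"
  shows "((\<lambda>s. f s \<bullet> g s) has_real_derivative (f s \<bullet> g' + f' \<bullet> g s)) (at s within S)"
  using has_derivative_inner[OF assms[unfolded has_vector_derivative_def]]
  unfolding has_field_derivative_def
  by (rule has_derivative_eq_rhs) (auto simp: fun_eq_iff algebra_simps)

lemma le_eps_lemma:
  fixes x y E :: real
  assumes "E > 0" "\<And>\<eta>. \<eta> > 0 \<Longrightarrow> x \<le> y + \<eta> * E"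
  shows "x \<le> y"
proof (rule ccontr)
  assume "\<not> x \<le> y"
  then have "x - y > 0" by simp
  then have "x \<le> y + ((x - y) / (2 * E)) * E" using assms by (intro assms(2)) simp
  also have "\<dots> = y + (x - y) / 2" using assms(1) by simp
  finally have "x \<le> y + (x - y) / 2" .
  then show False using \<open>x - y > 0\<close> by (simp add: field_simps)
qed

lemma norm2_bound: "norm (A *v v) \<le> norm2 A * norm v"
  unfolding norm2_def by (rule onorm[OF matrix_vector_mul_bounded_linear])

lemma norm2_nonneg: "0 \<le> norm2 A"
  unfolding norm2_def by (rule onorm_pos_le[OF matrix_vector_mul_bounded_linear])

lemma xe_growth:
  fixes e :: "real \<Rightarrow> real^'n" and A :: "real^'n^'n"
  assumes ab: "a \<le> b" and cont: "continuous_on {a..b} e"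
    and der: "\<And>s. a \<le> s \<Longrightarrow> s < b \<Longrightarrow> (e has_vector_derivative (A *v e s)) (at s within {s..})"
  shows "\<forall>s\<in>{a..b}. norm (e s) \<le> exp (norm2 A * (s - a)) * norm (e a)"
proof
  fix s assume s: "s \<in> {a..b}"
  define L where "L = 2 * norm2 A + 1"
  define c0 where "c0 = e a \<bullet> e a"
  have key: "e s \<bullet> e s \<le> c0 * exp (2 * norm2 A * (s - a)) + \<eta> * exp (L * (s - a))" if \<eta>: "\<eta> > 0" for \<eta>
  proof -
    define f where "f u = e u \<bullet> e u - c0 * exp (2 * norm2 A * (u - a)) - \<eta> * exp (L * (u - a))" for u
    have "\<forall>u\<in>{a..b}. f u \<le> 0"
    proof (rule right_comparison[OF ab])
      show "continuous_on {a..b} f" unfolding f_def by (intro continuous_intros cont)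
      show "f a \<le> 0" using \<eta> by (simp add: f_def c0_def)
      fix u assume u: "a \<le> u" "u < b" "f u = 0"
      have d1: "((\<lambda>u. e u \<bullet> e u) has_real_derivative (e u \<bullet> (A *v e u) + (A *v e u) \<bullet> e u)) (at u within {u..})"
        by (rule inner_has_real_derivative[OF der[OF u(1,2)] der[OF u(1,2)]])
      have d: "(f has_real_derivative ((e u \<bullet> (A *v e u) + (A *v e u) \<bullet> e u)
          - c0 * (exp (2 * norm2 A * (u - a)) * (2 * norm2 A)) - \<eta> * (exp (L * (u - a)) * L))) (at u within {u..})"
      proof -
        have d2: "((\<lambda>u. c0 * exp (2 * norm2 A * (u - a))) has_real_derivative c0 * (exp (2 * norm2 A * (u - a)) * (2 * norm2 A))) (at u within {u..})"
          by (intro derivative_eq_intros) auto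
        have d3: "((\<lambda>u. \<eta> * exp (L * (u - a))) has_real_derivative \<eta> * (exp (L * (u - a)) * L)) (at u within {u..})"
          by (intro derivative_eq_intros) auto
        show ?thesis unfolding f_def by (rule DERIV_diff[OF DERIV_diff[OF d1 d2] d3])
      qed
      have "e u \<bullet> (A *v e u) \<le> norm (e u) * norm (A *v e u)" by (rule norm_cauchy_schwarz)
      also have "\<dots> \<le> norm (e u) * (norm2 A * norm (e u))" by (intro mult_left_mono norm2_bound) simp
      finally have cs: "e u \<bullet> (A *v e u) \<le> norm2 A * (e u \<bullet> e u)"
        by (simp add: dot_square_norm power2_eq_square mult_ac)
      have fu: "e u \<bullet> e u = c0 * exp (2 * norm2 A * (u - a)) + \<eta> * exp (L * (u - a))"
        using u(3) by (simp add: f_def)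
      have "(e u \<bullet> (A *v e u) + (A *v e u) \<bullet> e u)
          - c0 * (exp (2 * norm2 A * (u - a)) * (2 * norm2 A)) - \<eta> * (exp (L * (u - a)) * L)
          \<le> 2 * norm2 A * (e u \<bullet> e u) - c0 * (exp (2 * norm2 A * (u - a)) * (2 * norm2 A)) - \<eta> * (exp (L * (u - a)) * L)"
        using cs inner_commute[of "A *v e u" "e u"] by linarith
      also have "\<dots> = - \<eta> * exp (L * (u - a))"
      proof -
        have gen: "\<And>X1 X2 n. 2 * n * (c0 * X1 + \<eta> * X2) - c0 * (X1 * (2 * n)) - \<eta> * (X2 * (2 * n + 1)) = - \<eta> * X2"
          by (simp add: algebra_simps)
        show ?thesis unfolding fu L_def by (rule gen)
      qed
      also have "\<dots> < 0" using \<eta> by simp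
      finally show "\<exists>d<0. (f has_real_derivative d) (at u within {u..})" using d by blast
    qed
    then have "f s \<le> 0" using s by blast
    then show ?thesis by (simp add: f_def)
  qed
  have "e s \<bullet> e s \<le> c0 * exp (2 * norm2 A * (s - a))"
    by (rule le_eps_lemma[OF _ key]) simp
  also have "\<dots> = (exp (norm2 A * (s - a)) * norm (e a))^2"
  proof -
    have "exp (2 * norm2 A * (s - a)) = (exp (norm2 A * (s - a)))^2"
      by (simp add: power2_eq_square flip: exp_add)
    then show ?thesis by (simp add: c0_def dot_square_norm power_mult_distrib)
  qed
  finally have "(norm (e s))^2 \<le> (exp (norm2 A * (s - a)) * norm (e a))^2"
    by (simp add: dot_square_norm)
  then show "norm (e s) \<le> exp (norm2 A * (s - a)) * norm (e a)"
    by (rule power2_le_imp_le) simp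
qed

lemma h_comparison:
  fixes h :: "real \<Rightarrow> real"
  assumes ab: "a \<le> b" and cont: "continuous_on {a..b} h" and h0: "\<And>s. s \<in> {a..b} \<Longrightarrow> 0 \<le> h s"
    and w: "w > 0" and mu: "\<mu> \<ge> 0" and b0: "b0 \<ge> 0"
    and der: "\<And>s. a \<le> s \<Longrightarrow> s < b \<Longrightarrow> \<exists>d. (h has_real_derivative d) (at s within {s..})
        \<and> d \<le> - w * h s + b0 * exp (\<mu> * (s - a)) * sqrt (h s)"
    and gle: "\<And>s. s \<in> {a..b} \<Longrightarrow>
        h a * exp (- w * (s - a)) + b0 / (w + \<mu>) * (exp (\<mu> * (s - a)) - exp (- w * (s - a))) \<le> 1"
  shows "\<forall>s\<in>{a..b}. h s \<le> 1"
proof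
  fix s assume s: "s \<in> {a..b}"
  define g where "g u = h a * exp (- w * (u - a)) + b0 / (w + \<mu>) * (exp (\<mu> * (u - a)) - exp (- w * (u - a)))" for u
  define L where "L = b0 * exp (\<mu> * (b - a)) + 1"
  have wmu: "w + \<mu> > 0" using w mu by simp
  have key: "h s \<le> g s + \<eta> * exp (L * (s - a))" if \<eta>: "\<eta> > 0" for \<eta>
  proof -
    define f where "f u = h u - g u - \<eta> * exp (L * (u - a))" for u
    have "\<forall>u\<in>{a..b}. f u \<le> 0"
    proof (rule right_comparison[OF ab])
      show "continuous_on {a..b} f" unfolding f_def g_def by (intro continuous_intros cont)
      show "f a \<le> 0" using \<eta> by (simp add: f_def g_def)
      fix u assume u: "a \<le> u" "u < b" "f u = 0"
      obtain d where d: "(h has_real_derivative d) (at u within {u..})"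
        "d \<le> - w * h u + b0 * exp (\<mu> * (u - a)) * sqrt (h u)" using der[OF u(1,2)] by blast
      define g' where "g' = h a * (exp (- w * (u - a)) * (- w)) + b0 / (w + \<mu>) * (exp (\<mu> * (u - a)) * \<mu> - exp (- w * (u - a)) * (- w))"
      have dg: "(g has_real_derivative g') (at u within {u..})"
        unfolding g_def g'_def by (intro derivative_eq_intros refl) auto
      have g'eq: "g' = - w * g u + b0 * exp (\<mu> * (u - a))"
        unfolding g'_def g_def using wmu by (simp add: field_simps)
      have df: "(f has_real_derivative (d - g' - \<eta> * (exp (L * (u - a)) * L))) (at u within {u..})"
      proof -
        have d3: "((\<lambda>u. \<eta> * exp (L * (u - a))) has_real_derivative \<eta> * (exp (L * (u - a)) * L)) (at u within {u..})"
          by (intro derivative_eq_intros) auto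
        show ?thesis unfolding f_def by (rule DERIV_diff[OF DERIV_diff[OF d(1) dg] d3])
      qed
      define E where "E = exp (L * (u - a))"
      have hu: "h u = g u + \<eta> * E" using u(3) by (simp add: f_def E_def)
      have gu: "g u \<le> 1" using gle[of u] u by (simp add: g_def)
      have hnn: "0 \<le> h u" using h0 u by simp
      have sq: "sqrt (h u) \<le> (1 + h u) / 2"
      proof -
        have "0 \<le> (sqrt (h u) - 1)^2" by simp
        then show ?thesis using hnn by (simp add: power2_eq_square algebra_simps)
      qed
      define X where "X = b0 * exp (\<mu> * (u - a))"
      have X0: "0 \<le> X" using b0 by (simp add: X_def)
      have XL: "X \<le> L - 1"
        unfolding X_def L_def using b0 mu u by (auto intro!: mult_left_mono)
      have E0: "E > 0" by (simp add: E_def)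
      have "d - g' - \<eta> * (exp (L * (u - a)) * L) \<le> - w * h u + X * sqrt (h u) - g' - \<eta> * E * L"
        using d(2) by (simp add: X_def E_def mult_ac)
      also have "\<dots> \<le> - w * h u + X * ((1 + h u) / 2) - g' - \<eta> * E * L"
        using mult_left_mono[OF sq X0] by simp
      also have "\<dots> = - w * \<eta> * E + X * (h u - 1) / 2 - \<eta> * E * L"
        unfolding g'eq hu X_def by (simp add: field_simps)
      also have "\<dots> \<le> - w * \<eta> * E + X * (\<eta> * E) / 2 - \<eta> * E * L"
        using hu gu X0 by (simp add: divide_right_mono mult_left_mono)
      also have "\<dots> = \<eta> * E * (- w + X / 2 - L)" by (simp add: algebra_simps)
      also have "\<dots> < 0"
        using \<eta> E0 w XL X0 by (intro mult_pos_neg) auto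
      finally show "\<exists>d<0. (f has_real_derivative d) (at u within {u..})" using df by blast
    qed
    then have "f s \<le> 0" using s by blast
    then show ?thesis by (simp add: f_def)
  qed
  have "h s \<le> g s" by (rule le_eps_lemma[OF _ key]) simp
  also have "\<dots> \<le> 1" using gle[OF s] by (simp add: g_def)
  finally show "h s \<le> 1" .
qed

lemma exists_last: "P 0 \<Longrightarrow> \<not> P (N::nat) \<Longrightarrow> \<exists>k. P k \<and> \<not> P (Suc k)"
  by (induction N) blast+

lemma sqrt_exp: "sqrt (exp x) = exp (x / 2)"
proof -
  have "exp x = (exp (x/2))^2" by (simp add: power2_eq_square flip: exp_add)
  then show ?thesis by simp
qed

lemma ex_neg_deriv: "D < 0 \<Longrightarrow> (f has_real_derivative D) F \<Longrightarrow> \<exists>d<0. (f has_real_derivative d) F"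
  by blast

theorem lemma10:
  fixes A :: "real^'n^'n" and B :: "real^'m^'n" and K :: "real^'n^'m"
    and Q P :: "real^'n^'n"
    and t0 Vd0 \<beta> a T :: real
    and x xh :: "real \<Rightarrow> real^'n"
    and r :: "nat \<Rightarrow> real"      \<comment> \<open>controller update times \<tilde>r_k\<close>
    and tk :: "nat \<Rightarrow> real"     \<comment> \<open>packet transmission times t_k\<close>
    and p :: "nat \<Rightarrow> nat"       \<comment> \<open>packet sizes p_k (packet has n p_k bits)\<close>
    and \<delta> :: "nat \<Rightarrow> real"
    and de :: "real \<Rightarrow> real"
    and pbar :: "real \<Rightarrow> nat" and \<theta> :: "nat \<Rightarrow> real"
    and t :: real
  defines "Abar \<equiv> A + B ** K"
  defines "V \<equiv> \<lambda>z::real^'n. z \<bullet> (P *v z)"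
    and "Vd \<equiv> \<lambda>s. Vd0 * exp (- \<beta> * (s - t0))"
    and "W \<equiv> lam_min Q / lam_max P - a * \<beta>"
    and "w \<equiv> lam_min Q / lam_max P - \<beta>"
    and "\<mu> \<equiv> norm2 A + \<beta> / 2"
    and "\<mu>bar \<equiv> norminf A + \<beta> / 2"
  defines "c \<equiv> W * sqrt (lam_min P) / (2 * sqrt (real CARD('n)) * norm2 (P ** B ** K))"
  defines "\<rho> \<equiv> \<lambda>h0. (w + \<mu>) * (1 - h0) / (W * (exp ((w + \<mu>) * T) - 1)) + 1"
  defines "hpf \<equiv> \<lambda>s. V (x s) / Vd s"
    and "\<epsilon> \<equiv> \<lambda>s. de s / (c * sqrt (Vd s))"
  defines "hch \<equiv> \<lambda>s. \<epsilon> s / \<rho> (hpf s)"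
  defines "Tb \<equiv> T_b pbar t"
  defines "\<epsilon>r \<equiv> min ((exp (w * Tb) - 1) * (w + \<mu>) / (W * (exp ((w + \<mu>) * Tb) - 1)))
                    (exp (- \<mu>bar * Tb))"
  assumes hurwitz: "hurwitz Abar"
    and Q_pd: "pos_def Q" and P_pd: "pos_def P"
    and lyap: "P ** Abar + transpose Abar ** P = - Q"
    and t0: "t0 \<ge> 0" and Vd0: "Vd0 > 0" and beta: "\<beta> > 0" and a: "a > 1"
    and W_pos: "W > 0" and T_pos: "T > 0"
    \<comment> \<open>plant \<open>x' = A x + B u\<close>, \<open>u = K xh\<close> (right derivative; x continuous)\<close>
    and x_cont: "continuous_on {t0..} x"
    and x_ode: "\<And>s. s \<ge> t0 \<Longrightarrow>
        (x has_vector_derivative (A *v x s + B *v (K *v xh s))) (at s within {s..})"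
    \<comment> \<open>controller update times and xh' = Abar xh between them\<close>
    and r_mono: "strict_mono r" and r0: "r 0 \<le> t0"
    and r_unbounded: "filterlim r at_top sequentially"
    and xh_flow: "\<And>k s. r k \<le> s \<Longrightarrow> s < r (Suc k) \<Longrightarrow>
        xh s = mexp ((s - r k) *\<^sub>R Abar) *v xh (r k)"
    \<comment> \<open>transmission times and the error bound d_e\<close>
    and tk_le: "\<And>k. tk k \<le> r k"
    and de_def: "\<And>k s. r k \<le> s \<Longrightarrow> s < r (Suc k) \<Longrightarrow>
        de s = norminf (mexp ((s - tk k) *\<^sub>R A)) * \<delta> k"
    and delta_rec: "\<And>k. \<delta> (Suc k) = 2 powr (- real (p (Suc k))) * de (tk (Suc k))"
    \<comment> \<open>channel: pbar constant on slots (\<theta> j, \<theta> (j+1)]\<close>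
    and theta_mono: "strict_mono \<theta>" and theta0: "\<theta> 0 = 0"
    and theta_unbounded: "filterlim \<theta> at_top sequentially"
    and pbar_slots: "\<And>j s s'. s \<in> {\<theta> j<..\<theta> (Suc j)} \<Longrightarrow> s' \<in> {\<theta> j<..\<theta> (Suc j)} \<Longrightarrow>
        pbar s = pbar s'"
    \<comment> \<open>the next blackout after t exists and ends\<close>
    and blackout_ex: "\<exists>s\<ge>t. pbar s = 0"
    and blackout_end: "\<exists>s\<ge>tau_l pbar t. pbar s > 0"
    \<comment> \<open>hypotheses of the lemma\<close>
    and t_ge: "t \<ge> t0"
    and no_update: "\<And>k. r k \<notin> {tau_l pbar t<..tau_u pbar t}"
    and err_bound: "\<And>s. s \<ge> t0 \<Longrightarrow> infnorm (x s - xh s) \<le> de s"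
    and eps_l: "\<epsilon> (tau_l pbar t) \<le> \<epsilon>r"
    and hpf_l: "hpf (tau_l pbar t) \<le> 1"
  shows "(\<forall>s\<in>{tau_l pbar t..tau_u pbar t}. hpf s \<le> 1)
         \<and> hch (tau_u pbar t) \<le> 1 \<and> \<epsilon> (tau_u pbar t) \<le> 1"
proof -
  define l where "l = tau_l pbar t"
  define u where "u = tau_u pbar t"
  note no_update' = no_update[folded l_def u_def]
  have tl: "t \<le> l"
    unfolding l_def tau_l_def using blackout_ex by (intro cInf_greatest) auto
  have lu: "l \<le> u"
    unfolding u_def tau_u_def l_def[symmetric] using blackout_end[folded l_def] by (intro cInf_greatest) auto
  have Tb_eq: "Tb = u - l" unfolding Tb_def T_b_def l_def u_def ..
  have t0l: "t0 \<le> l" using t_ge tl by simp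
  obtain N where N: "r N > l"
  proof -
    have "\<forall>\<^sub>F n in sequentially. l < r n"
      using r_unbounded unfolding filterlim_at_top_dense by blast
    then show ?thesis using that unfolding eventually_sequentially by blast
  qed
  obtain k where k: "r k \<le> l" "\<not> r (Suc k) \<le> l"
    using exists_last[of "\<lambda>n. r n \<le> l" N] r0 t0l N by force
  have uk: "u < r (Suc k)"
  proof (rule ccontr)
    assume "\<not> u < r (Suc k)"
    then have "r (Suc k) \<in> {l<..u}" using k by auto
    then show False using no_update' by blast
  qed
  have inI: "r k \<le> s \<and> s < r (Suc k) \<and> t0 \<le> s" if "s \<in> {l..u}" for s
    using that k uk t0l by auto
  have symQ: "symmetric_mat Q" and symP: "symmetric_mat P" using Q_pd P_pd by (auto simp: pos_def_def)
  obtain uq where uq: "norm uq = 1" "uq \<bullet> (Q *v uq) = lam_min Q" "\<And>z. lam_min Q * (z \<bullet> z) \<le> z \<bullet> (Q *v z)"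
    using rayleigh_min[OF symQ] by blast
  obtain up where up: "norm up = 1" "up \<bullet> (P *v up) = lam_min P" "\<And>z. lam_min P * (z \<bullet> z) \<le> z \<bullet> (P *v z)"
    using rayleigh_min[OF symP] by blast
  obtain uP where uP: "norm uP = 1" "uP \<bullet> (P *v uP) = lam_max P" "\<And>z. z \<bullet> (P *v z) \<le> lam_max P * (z \<bullet> z)"
    using rayleigh_max[OF symP] by blast
  have lmQ: "lam_min Q > 0" using uq Q_pd unfolding pos_def_def by (metis norm_zero zero_neq_one)
  have lmP: "lam_min P > 0" using up P_pd unfolding pos_def_def by (metis norm_zero zero_neq_one)
  have lMP: "lam_max P > 0" using uP P_pd unfolding pos_def_def by (metis norm_zero zero_neq_one)
  have Vnn: "0 \<le> V z" for z
    using P_pd unfolding pos_def_def V_def by (cases "z = 0") (auto intro: less_imp_le)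
  have w_pos: "w > 0" using W_pos a beta unfolding w_def W_def
    by (smt (verit) mult_less_cancel_right2)
  have mu_pos: "\<mu> > 0" using norm2_nonneg[of A] beta unfolding \<mu>_def by simp
  have c_nn: "0 \<le> c" unfolding c_def using W_pos lmP norm2_nonneg[of "P ** B ** K"] by simp
  have Vd_pos: "Vd s > 0" for s unfolding Vd_def using Vd0 by simp
  define F where "F s = mexp ((s - r k) *\<^sub>R Abar) *v xh (r k)" for s
  have dF: "(F has_vector_derivative (Abar *v F s)) (at s within S)" for s S
    unfolding F_def by (rule mexp_deriv)
  have xhF: "xh s = F s" if "s \<in> {l..u}" for s
    using inI[OF that] by (simp add: F_def xh_flow)
  have contF: "continuous_on S F" for S
    by (intro continuous_at_imp_continuous_on ballI has_vector_derivative_continuous[OF dF])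
  have cont_xh: "continuous_on {l..u} xh"
    using contF[of "{l..u}"] by (rule continuous_on_eq) (simp add: xhF)
  have dxh: "(xh has_vector_derivative (Abar *v xh s)) (at s within {s..})" if "l \<le> s" "s < u" for s
  proof -
    have s1: "r k \<le> s" "s < r (Suc k)" using inI[of s] that by auto
    have "(xh has_vector_derivative (Abar *v F s)) (at s within {s..})"
    proof (rule has_vector_derivative_transform_within[OF dF])
      show "0 < r (Suc k) - s" using s1 by simp
      show "s \<in> {s..}" by simp
      fix x' assume "x' \<in> {s..}" "dist x' s < r (Suc k) - s"
      then have "r k \<le> x'" "x' < r (Suc k)" using s1 by (auto simp: dist_real_def)
      then show "F x' = xh x'" by (simp add: F_def xh_flow)
    qed
    then show ?thesis using xhF[of s] that by simp
  qed
  have Abar_apply: "Abar *v z = A *v z + B *v (K *v z)" for z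
    unfolding Abar_def by (simp add: matrix_vector_mult_add_rdistrib matrix_vector_mul_assoc)
  define xe where "xe s = x s - xh s" for s
  have dxe: "(xe has_vector_derivative (A *v xe s)) (at s within {s..})" if "l \<le> s" "s < u" for s
  proof -
    have "t0 \<le> s" using t0l that by simp
    from has_vector_derivative_diff[OF x_ode[OF this] dxh[OF that]]
    show ?thesis unfolding xe_def
      by (simp add: Abar_apply matrix_vector_mult_diff_distrib)
  qed
  have cont_x: "continuous_on {l..u} x"
    using x_cont by (rule continuous_on_subset) (use t0l in auto)
  have cont_xe: "continuous_on {l..u} xe"
    unfolding xe_def by (intro continuous_intros cont_x cont_xh)
  have xe_grow: "\<forall>s\<in>{l..u}. norm (xe s) \<le> exp (norm2 A * (s - l)) * norm (xe l)"
    by (rule xe_growth[OF lu cont_xe dxe])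
  have xe_l: "norm (xe l) \<le> sqrt (real CARD('n)) * de l"
  proof -
    have "norm (xe l) \<le> sqrt (real DIM(real^'n)) * infnorm (xe l)" by (rule norm_le_infnorm)
    also have "\<dots> \<le> sqrt (real CARD('n)) * de l"
      using err_bound[OF t0l] by (simp add: xe_def)
    finally show ?thesis .
  qed
  have de_l_nn: "0 \<le> de l" using err_bound[OF t0l] infnorm_pos_le[of "x l - xh l"] by linarith
  define N2 where "N2 = norm2 (P ** B ** K)"
  define nn where "nn = real CARD('n)"
  define b0 where "b0 = W * \<epsilon> l"
  define K0 where "K0 = 2 * N2 * sqrt nn * de l / (sqrt (lam_min P) * sqrt (Vd l))"
  have N2_nn: "0 \<le> N2" unfolding N2_def by (rule norm2_nonneg)
  have b0_eq: "b0 = K0"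
  proof (cases "N2 = 0")
    case True
    then have "c = 0" unfolding c_def N2_def by simp
    then show ?thesis using True unfolding b0_def K0_def \<epsilon>_def by simp
  next
    case False
    then have N2p: "N2 > 0" using N2_nn by simp
    have nnp: "nn > 0" unfolding nn_def by simp
    have c_eq: "c = W * sqrt (lam_min P) / (2 * sqrt nn * N2)" unfolding c_def nn_def N2_def ..
    show ?thesis unfolding b0_def K0_def \<epsilon>_def c_eq
      using N2p nnp W_pos lmP Vd_pos[of l] by (simp add: field_simps)
  qed
  have b0_nn: "0 \<le> b0" unfolding b0_eq K0_def using N2_nn de_l_nn lmP Vd_pos[of l]
    by (intro divide_nonneg_nonneg mult_nonneg_nonneg) (auto simp: nn_def)
  have negmv: "(- M) *v z = - (M *v z)" for M :: "real^'n^'n" and z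
    by (simp add: vec_eq_iff matrix_vector_mult_def sum_negf)
  have lyap_x: "z \<bullet> (P *v (Abar *v z)) = - (z \<bullet> (Q *v z)) / 2" for z
  proof -
    have "z \<bullet> ((P ** Abar + transpose Abar ** P) *v z) = - (z \<bullet> (Q *v z))"
      using lyap by (simp add: negmv)
    moreover have "z \<bullet> ((P ** Abar + transpose Abar ** P) *v z) = 2 * (z \<bullet> (P *v (Abar *v z)))"
    proof -
      have "z \<bullet> (transpose Abar *v (P *v z)) = (Abar *v z) \<bullet> (P *v z)"
        using dot_transpose[of z "transpose Abar" "P *v z"] by (simp only: transpose_transpose)
      also have "\<dots> = z \<bullet> (P *v (Abar *v z))" by (rule sym_dot[OF symP])
      finally show ?thesis
        by (simp add: matrix_vector_mult_add_rdistrib inner_add_right flip: matrix_vector_mul_assoc)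
    qed
    ultimately show ?thesis by simp
  qed
  have PBK: "P *v (B *v (K *v z)) = (P ** B ** K) *v z" for z
    by (simp add: matrix_vector_mul_assoc matrix_mul_assoc)
  have hpf_eq: "hpf s = V (x s) / Vd s" for s unfolding hpf_def ..
  have h_nn: "0 \<le> hpf s" for s unfolding hpf_eq using Vnn Vd_pos[of s] by simp
  have cont_h: "continuous_on {l..u} hpf"
  proof -
    have "continuous_on {l..u} (\<lambda>s. P *v x s)"
      by (rule bounded_linear.continuous_on[OF matrix_vector_mul_bounded_linear cont_x])
    then have "continuous_on {l..u} (\<lambda>s. x s \<bullet> (P *v x s) / (Vd0 * exp (- \<beta> * (s - t0))))"
      using Vd0 by (intro continuous_intros cont_x) auto
    then show ?thesis by (simp add: hpf_def V_def Vd_def)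
  qed
  have dh: "\<exists>d. (hpf has_real_derivative d) (at s within {s..})
        \<and> d \<le> - w * hpf s + b0 * exp (\<mu> * (s - l)) * sqrt (hpf s)" if s: "l \<le> s" "s < u" for s
  proof -
    have st0: "t0 \<le> s" using s t0l by simp
    define xd where "xd = A *v x s + B *v (K *v xh s)"
    have dx: "(x has_vector_derivative xd) (at s within {s..})"
      unfolding xd_def by (rule x_ode[OF st0])
    have dPx: "((\<lambda>s. P *v x s) has_vector_derivative P *v xd) (at s within {s..})"
      by (rule bounded_linear.has_vector_derivative[OF matrix_vector_mul_bounded_linear dx])
    define dV where "dV = x s \<bullet> (P *v xd) + xd \<bullet> (P *v x s)"
    have dVx: "((\<lambda>s. V (x s)) has_real_derivative dV) (at s within {s..})"
      unfolding V_def dV_def using inner_has_real_derivative[OF dx dPx] by simp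
    have dVd: "(Vd has_real_derivative (- \<beta> * Vd s)) (at s within {s..})"
      unfolding Vd_def by (auto intro!: derivative_eq_intros)
    have hfun: "hpf = (\<lambda>s. V (x s) / Vd s)" by (simp add: hpf_eq fun_eq_iff)
    define D where "D = (dV * Vd s - V (x s) * (- \<beta> * Vd s)) / (Vd s * Vd s)"
    have dhD: "(hpf has_real_derivative D) (at s within {s..})"
      unfolding hfun D_def by (rule DERIV_divide[OF dVx dVd]) (use Vd_pos[of s] in simp)
    have D_eq: "D = dV / Vd s + \<beta> * hpf s"
      unfolding D_def hpf_eq using Vd_pos[of s] by (simp add: field_simps)
    have xd_eq: "xd = Abar *v x s - B *v (K *v xe s)"
      unfolding xd_def xe_def Abar_apply by (simp add: matrix_vector_mult_diff_distrib algebra_simps)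
    have dV_eq: "dV = - (x s \<bullet> (Q *v x s)) - 2 * (x s \<bullet> ((P ** B ** K) *v xe s))"
    proof -
      have "dV = 2 * (x s \<bullet> (P *v xd))" unfolding dV_def using sym_dot[OF symP, of xd "x s"] by simp
      also have "\<dots> = 2 * (x s \<bullet> (P *v (Abar *v x s))) - 2 * (x s \<bullet> (P *v (B *v (K *v xe s))))"
        unfolding xd_eq by (simp add: matrix_vector_mult_diff_distrib inner_diff_right)
      finally show ?thesis unfolding lyap_x PBK by simp
    qed
    define nx where "nx = norm (x s)"
    have Vx: "V (x s) = hpf s * Vd s" unfolding hpf_eq using Vd_pos[of s] by simp
    have q1: "x s \<bullet> (Q *v x s) \<ge> lam_min Q / lam_max P * V (x s)"
    proof -
      have "V (x s) \<le> lam_max P * (x s \<bullet> x s)" unfolding V_def by (rule uP(3))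
      then have "lam_min Q / lam_max P * V (x s) \<le> lam_min Q * (x s \<bullet> x s)"
        using lmQ lMP by (simp add: field_simps)
      also have "\<dots> \<le> x s \<bullet> (Q *v x s)" by (rule uq(3))
      finally show ?thesis .
    qed
    have nx_le: "nx \<le> sqrt (V (x s) / lam_min P)"
    proof (rule real_le_rsqrt)
      have "lam_min P * (x s \<bullet> x s) \<le> V (x s)" unfolding V_def by (rule up(3))
      then show "nx^2 \<le> V (x s) / lam_min P"
        using lmP by (simp add: nx_def dot_square_norm field_simps)
    qed
    define Es where "Es = exp (norm2 A * (s - l)) * (sqrt nn * de l)"
    have xe_le: "norm (xe s) \<le> Es"
    proof -
      have "norm (xe s) \<le> exp (norm2 A * (s - l)) * norm (xe l)" using xe_grow s lu by auto
      also have "\<dots> \<le> Es" unfolding Es_def nn_def by (intro mult_left_mono xe_l) simp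
      finally show ?thesis .
    qed
    have sqnn: "0 \<le> sqrt (V (x s) / lam_min P)" using Vnn[of "x s"] lmP by simp
    have cross: "- 2 * (x s \<bullet> ((P ** B ** K) *v xe s)) \<le> 2 * sqrt (V (x s) / lam_min P) * N2 * Es"
    proof -
      have "- (x s \<bullet> ((P ** B ** K) *v xe s)) \<le> norm (x s) * norm ((P ** B ** K) *v xe s)"
        using Cauchy_Schwarz_ineq2[of "x s" "(P ** B ** K) *v xe s"] by linarith
      also have "\<dots> \<le> nx * (N2 * norm (xe s))"
        unfolding nx_def N2_def by (intro mult_left_mono norm2_bound) simp
      also have "\<dots> \<le> sqrt (V (x s) / lam_min P) * (N2 * Es)"
        by (rule mult_mono[OF nx_le mult_left_mono[OF xe_le N2_nn] sqnn mult_nonneg_nonneg[OF N2_nn norm_ge_zero]])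
      finally have "- (x s \<bullet> ((P ** B ** K) *v xe s)) \<le> sqrt (V (x s) / lam_min P) * (N2 * Es)" .
      then show ?thesis unfolding mult.assoc by linarith
    qed
    have dV_le: "dV \<le> - (lam_min Q / lam_max P) * V (x s) + 2 * sqrt (V (x s) / lam_min P) * N2 * Es"
      using dV_eq q1 cross by linarith
    have D_le: "D \<le> - w * hpf s + 2 * sqrt (V (x s) / lam_min P) * N2 * Es / Vd s"
    proof -
      have "D \<le> (- (lam_min Q / lam_max P) * V (x s) + 2 * sqrt (V (x s) / lam_min P) * N2 * Es) / Vd s + \<beta> * hpf s"
        unfolding D_eq using dV_le Vd_pos[of s] by (simp add: divide_right_mono)
      also have "\<dots> = - w * hpf s + 2 * sqrt (V (x s) / lam_min P) * N2 * Es / Vd s"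
        unfolding w_def hpf_eq using Vd_pos[of s] by (simp add: field_simps)
      finally show ?thesis .
    qed
    have e1: "Vd s = Vd l * exp (- \<beta> * (s - l))"
      unfolding Vd_def by (simp add: mult.assoc flip: exp_add) (simp add: algebra_simps)
    have e3: "sqrt (Vd s) = sqrt (Vd l) * exp (- \<beta> * (s - l) / 2)"
      unfolding e1 by (simp add: real_sqrt_mult sqrt_exp)
    have e2: "exp (\<mu> * (s - l)) = exp (norm2 A * (s - l)) * exp (\<beta> * (s - l) / 2)"
      unfolding \<mu>_def by (simp flip: exp_add) (simp add: algebra_simps)
    have e4: "exp (\<beta> * (s - l) / 2) * exp (- \<beta> * (s - l) / 2) = 1"
      by (simp flip: exp_add)
    define SV where "SV = sqrt (Vd s)"
    have SVp: "SV > 0" using Vd_pos[of s] by (simp add: SV_def)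
    have VdSV: "Vd s = SV * SV" using Vd_pos[of s] by (simp add: SV_def)
    have sqV: "sqrt (V (x s) / lam_min P) = sqrt (hpf s) * SV / sqrt (lam_min P)"
      unfolding Vx SV_def by (simp add: real_sqrt_mult real_sqrt_divide)
    have term_eq: "2 * sqrt (V (x s) / lam_min P) * N2 * Es / Vd s = b0 * exp (\<mu> * (s - l)) * sqrt (hpf s)"
    proof -
      define EA where "EA = exp (norm2 A * (s - l))"
      define Ep where "Ep = exp (\<beta> * (s - l) / 2)"
      define Em where "Em = exp (- \<beta> * (s - l) / 2)"
      have EpEm: "Ep * Em = 1" using e4 by (simp add: Ep_def Em_def)
      have pos: "sqrt (Vd l) > 0" "sqrt (lam_min P) > 0" "Em > 0"
        using Vd_pos[of l] lmP by (auto simp: Em_def)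
      have "2 * sqrt (V (x s) / lam_min P) * N2 * Es / Vd s
          = 2 * sqrt (hpf s) * N2 * (EA * (sqrt nn * de l)) / (sqrt (lam_min P) * SV)"
        unfolding sqV Es_def EA_def VdSV using SVp pos by (simp add: field_simps)
      also have "\<dots> = 2 * sqrt (hpf s) * N2 * (EA * (sqrt nn * de l)) / (sqrt (lam_min P) * (sqrt (Vd l) * Em))"
        unfolding SV_def e3 Em_def ..
      also have "\<dots> = K0 * (EA * Ep) * sqrt (hpf s)"
        unfolding K0_def using pos EpEm by (simp add: field_simps)
      finally show ?thesis unfolding b0_eq e2 EA_def Ep_def .
    qed
    show ?thesis using dhD D_le term_eq by auto
  qed
  have hpf_le: "\<forall>s\<in>{l..u}. hpf s \<le> 1"
  proof (rule h_comparison[OF lu cont_h h_nn w_pos less_imp_le[OF mu_pos] b0_nn dh])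
    fix s assume s: "s \<in> {l..u}"
    define D where "D = s - l"
    define q where "q = w + \<mu>"
    have D: "0 \<le> D" "D \<le> Tb" using s unfolding D_def Tb_eq by auto
    have qp: "q > 0" "w \<le> q" using w_pos mu_pos by (auto simp: q_def)
    have h0: "hpf l \<le> 1" using hpf_l unfolding l_def .
    have X: "b0 * (exp (q * D) - 1) / q \<le> exp (w * D) - 1"
    proof (cases "Tb = 0")
      case True
      then have "D = 0" using D by simp
      then show ?thesis by simp
    next
      case False
      then have Tbp: "Tb > 0" using D by simp
      have eqT: "exp (q * Tb) - 1 > 0" using qp Tbp by simp
      have eqD: "exp (q * D) - 1 \<ge> 0" using qp D by simp
      have "\<epsilon> l \<le> \<epsilon>r" using eps_l unfolding l_def .
      also have "\<dots> \<le> (exp (w * Tb) - 1) * (w + \<mu>) / (W * (exp ((w + \<mu>) * Tb) - 1))"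
        unfolding \<epsilon>r_def by simp
      finally have el: "\<epsilon> l \<le> (exp (w * Tb) - 1) * q / (W * (exp (q * Tb) - 1))"
        unfolding q_def .
      have "b0 \<le> W * ((exp (w * Tb) - 1) * q / (W * (exp (q * Tb) - 1)))"
        unfolding b0_def by (rule mult_left_mono[OF el]) (use W_pos in simp)
      also have "\<dots> = (exp (w * Tb) - 1) * q / (exp (q * Tb) - 1)" using W_pos by simp
      finally have b0le: "b0 \<le> (exp (w * Tb) - 1) * q / (exp (q * Tb) - 1)" .
      have "b0 * (exp (q * D) - 1) / q \<le> (exp (w * Tb) - 1) * q / (exp (q * Tb) - 1) * (exp (q * D) - 1) / q"
        using b0le eqD qp by (intro divide_right_mono mult_right_mono) auto
      also have "\<dots> = (exp (w * Tb) - 1) * (exp (q * D) - 1) / (exp (q * Tb) - 1)"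
        using qp by simp
      also have "\<dots> \<le> (exp (w * D) - 1) * (exp (q * Tb) - 1) / (exp (q * Tb) - 1)"
        using exp_ratio[OF w_pos qp(2) D Tbp] eqT by (intro divide_right_mono) auto
      also have "\<dots> = exp (w * D) - 1" using qp Tbp by (intro nonzero_mult_div_cancel_right) simp
      finally show ?thesis .
    qed
    have em: "exp (\<mu> * D) = exp (- w * D) * exp (q * D)"
      unfolding q_def by (simp flip: exp_add) (simp add: algebra_simps)
    have "hpf l * exp (- w * D) + b0 / q * (exp (\<mu> * D) - exp (- w * D))
        = exp (- w * D) * (hpf l + b0 * (exp (q * D) - 1) / q)"
    proof -
      have gen: "\<And>E1 E2 h. h * E1 + b0 / q * (E1 * E2 - E1) = E1 * (h + b0 * (E2 - 1) / q)"
        using qp by (simp add: field_simps)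
      show ?thesis unfolding em by (rule gen)
    qed
    also have "\<dots> \<le> exp (- w * D) * (1 + (exp (w * D) - 1))"
      using h0 X by (intro mult_left_mono add_mono) auto
    also have "\<dots> = 1" by (simp flip: exp_add)
    finally show "hpf l * exp (- w * (s - l)) + b0 / (w + \<mu>) * (exp (\<mu> * (s - l)) - exp (- w * (s - l))) \<le> 1"
      unfolding D_def q_def .
  qed
  have uI: "u \<in> {l..u}" using lu by simp
  have lI: "l \<in> {l..u}" using lu by simp
  define Ml where "Ml = mexp ((l - tk k) *\<^sub>R A)"
  define Mt where "Mt = mexp (Tb *\<^sub>R A)"
  have de_u: "de u = norminf (mexp ((u - tk k) *\<^sub>R A)) * \<delta> k"
    using inI[OF uI] de_def by blast
  have de_l: "de l = norminf Ml * \<delta> k"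
    using inI[OF lI] de_def unfolding Ml_def by blast
  have MtMl: "Mt ** Ml = mexp ((u - tk k) *\<^sub>R A)"
    unfolding Mt_def Ml_def mexp_add Tb_eq by (simp add: algebra_simps)
  have Ml_pos: "norminf Ml > 0"
  proof (rule ccontr)
    assume "\<not> norminf Ml > 0"
    then have "norminf Ml = 0" using norminf_nonneg[of Ml] by simp
    then have "Ml = 0" by (rule norminf_eq_0)
    moreover have "mexp ((- (l - tk k)) *\<^sub>R A) ** Ml = mat 1"
      unfolding Ml_def mexp_add by (simp add: mexp_zero[of A, simplified])
    ultimately have "(mat 1 :: real^'n^'n) = 0" by simp
    then have "(mat 1 :: real^'n^'n) $ undefined $ undefined = 0" by simp
    then show False by (simp add: mat_def)
  qed
  have delta_nn: "0 \<le> \<delta> k"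
    using de_l_nn Ml_pos unfolding de_l by (simp add: zero_le_mult_iff)
  have Tb_nn: "0 \<le> Tb" unfolding Tb_eq using lu by simp
  have Mt_le: "norminf Mt \<le> exp (Tb * norminf A)"
    using norminf_mexp[of "Tb *\<^sub>R A"] Tb_nn unfolding Mt_def by (simp add: norminf_scaleR)
  have de_u_le: "de u \<le> exp (Tb * norminf A) * de l"
  proof -
    have "de u \<le> norminf Mt * norminf Ml * \<delta> k"
      unfolding de_u MtMl[symmetric] using delta_nn by (intro mult_right_mono norminf_mult)
    also have "\<dots> \<le> exp (Tb * norminf A) * norminf Ml * \<delta> k"
      using delta_nn Ml_pos Mt_le by (intro mult_right_mono) auto
    finally show ?thesis unfolding de_l by (simp add: mult.assoc)
  qed
  have eps_u: "\<epsilon> u \<le> 1"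
  proof (cases "c = 0")
    case True then show ?thesis unfolding \<epsilon>_def by simp
  next
    case False
    then have cp: "c > 0" using c_nn by simp
    have eu1: "Vd u = Vd l * exp (- \<beta> * Tb)"
      unfolding Vd_def Tb_eq by (simp add: mult.assoc flip: exp_add) (simp add: algebra_simps)
    have eu3: "sqrt (Vd u) = sqrt (Vd l) * exp (- \<beta> * Tb / 2)"
      unfolding eu1 by (simp add: real_sqrt_mult sqrt_exp)
    have el: "\<epsilon> l \<le> exp (- \<mu>bar * Tb)" using eps_l unfolding l_def[symmetric] \<epsilon>r_def by simp
    have pos: "sqrt (Vd l) > 0" using Vd_pos[of l] by simp
    have "\<epsilon> u \<le> exp (Tb * norminf A) * de l / (c * (sqrt (Vd l) * exp (- \<beta> * Tb / 2)))"
      unfolding \<epsilon>_def eu3 using de_u_le cp pos by (intro divide_right_mono) auto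
    also have "\<dots> = (exp (Tb * norminf A) * exp (\<beta> * Tb / 2)) * \<epsilon> l"
    proof -
      have "exp (\<beta> * Tb / 2) * exp (- \<beta> * Tb / 2) = 1" by (simp flip: exp_add)
      then show ?thesis unfolding \<epsilon>_def using cp pos by (simp add: field_simps)
    qed
    also have "exp (Tb * norminf A) * exp (\<beta> * Tb / 2) = exp (\<mu>bar * Tb)"
      unfolding \<mu>bar_def by (simp flip: exp_add) (simp add: algebra_simps)
    also have "exp (\<mu>bar * Tb) * \<epsilon> l \<le> exp (\<mu>bar * Tb) * exp (- \<mu>bar * Tb)"
      using el by (intro mult_left_mono) auto
    also have "\<dots> = 1" by (simp flip: exp_add)
    finally show ?thesis .
  qed
  have hch_u: "hch u \<le> 1"
  proof -
    have hu: "hpf u \<le> 1" using hpf_le uI by blast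
    have den: "W * (exp ((w + \<mu>) * T) - 1) > 0" using W_pos w_pos mu_pos T_pos by simp
    have "0 \<le> (w + \<mu>) * (1 - hpf u) / (W * (exp ((w + \<mu>) * T) - 1))"
      using hu w_pos mu_pos den by (intro divide_nonneg_pos mult_nonneg_nonneg) auto
    then have rho1: "1 \<le> \<rho> (hpf u)" unfolding \<rho>_def by simp
    show ?thesis unfolding hch_def using eps_u rho1 by (simp add: divide_le_eq)
  qed
  show ?thesis using hpf_le hch_u eps_u unfolding l_def u_def by blast
qed

end
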